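(* Let $\mathcal{L}=(n,\mathcal{M},\mathcal{C})$ be a simple linearization and let $\mathcal{T}\subseteq\mathcal{P}$. Suppose $D(\mathcal{L})$ has a subgraph $Z$ with $|U(Z)|>1$ satisfying: (a) its underlying undirected graph is a cycle; (b) $V(Z)\subseteq\mathrm{succ}(\mathcal{T})$; (c) for all $s\in\mathcal{S}$, $t\in\mathcal{T}$ there is at most one directed $t$-$s$-path in $D(\mathcal{L})$; (d) $|\mathrm{pred}(s)\cap L(Z)|\le1$ for all $s\in\mathcal{S}$; (e) $|\mathrm{succ}(t)\cap U(Z)|\le1$ for all $t\in\mathcal{T}$. Then $\mathrm{proj}_{\mathcal{S}\cup\mathcal{T}}(P(\mathcal{L}))$ is not integral.
   Context: $[n]=\{1,\dots,n\}$; a monomial is a nonempty subset of $[n]$; $\mathcal{S}=\{\{i\}:i\in[n]\}$. A linearization is a triple $\mathcal{L}=(n,\mathcal{M},\mathcal{C})$, where $\mathcal{M}$ is a set of monomials with $\mathcal{S}\subseteq\mathcal{M}$ and $\mathcal{C}$ is a set of AND-constraints; each AND-constraint is a set $c\subseteq\mathcal{M}$ whose union $\bigcup c$ (resultant) lies in $\mathcal{M}$. $\mathcal{P}=\mathcal{M}\setminus\mathcal{S}$. Linearizations are consistent: each $m\in\mathcal{P}$ is the resultant of some $c$ with $|m'|<|m|$ for all $m'\in c$. $\mathcal{L}$ is simple if each proper monomial is the resultant of exactly one AND-constraint and $|\mathcal{C}|=|\mathcal{P}|$. $P(\mathcal{L})\subseteq\mathbb{R}^{\mathcal{M}}$ is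 the set of $y$ with $0\le y_m\le1$ ($m\in\mathcal{M}$), $y_{\bigcup c}\le y_m$ ($c\in\mathcal{C}$, $m\in c$), $\sum_{m\in c}y_m\le y_{\bigcup c}+|c|-1$ ($c\in\mathcal{C}$). $D(\mathcal{L})$ has node set $\mathcal{M}$ and, for each $c\in\mathcal{C}$, arcs from $\bigcup c$ to each $m\in c$. Cycles are simple; $V(Z)$ is the node set of $Z$. $\mathrm{succ}(W)$ (resp. $\mathrm{pred}(W)$) is the set of nodes reachable from (resp. which can reach) $W$ by directed paths, including $W$; $\mathrm{succ}(w)=\mathrm{succ}(\{w\})$, $\mathrm{pred}(w)=\mathrm{pred}(\{w\})$. $U(Z)$ (resp. $L(Z)$) is the set of nodes with out-degree (resp. in-degree) at least $2$ in $Z$. $\mathrm{proj}_{\mathcal{M}'}$ is orthogonal projection onto coordinates in $\mathcal{M}'$. *)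

theory Defs
  imports Complex_Main
begin

(* Monomials are sets of variables (nat set); an AND-constraint is a set of monomials. *)
type_synonym monomial = "nat set"
type_synonym andc = "monomial set"

definition singletons :: "nat \<Rightarrow> monomial set" where
  "singletons n = {{i} | i. i \<in> {1..n}}"

definition proper_monos :: "nat \<Rightarrow> monomial set \<Rightarrow> monomial set" where
  "proper_monos n M = M - singletons n"

definition linearization :: "nat \<Rightarrow> monomial set \<Rightarrow> andc set \<Rightarrow> bool" where
  "linearization n M C \<longleftrightarrow>
     (\<forall>m\<in>M. m \<noteq> {} \<and> m \<subseteq> {1..n}) \<and>
     singletons n \<subseteq> M \<and>
     (\<forall>c\<in>C. c \<subseteq> M \<and> \<Union>c \<in> M) \<and>
     (\<forall>m\<in>proper_monos n M. \<exists>c\<in>C. \<Union>c = m \<and> (\<forall>m'\<in>c. card m' < card m))"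

definition simple_linearization :: "nat \<Rightarrow> monomial set \<Rightarrow> andc set \<Rightarrow> bool" where
  "simple_linearization n M C \<longleftrightarrow>
     linearization n M C \<and>
     (\<forall>m\<in>proper_monos n M. \<exists>!c. c \<in> C \<and> \<Union>c = m) \<and>
     card C = card (proper_monos n M)"

(* Points of R^M are represented as functions monomial => real vanishing outside M *)
definition polytope_L :: "monomial set \<Rightarrow> andc set \<Rightarrow> (monomial \<Rightarrow> real) set" where
  "polytope_L M C = {y.
     (\<forall>m. m \<notin> M \<longrightarrow> y m = 0) \<and>
     (\<forall>m\<in>M. 0 \<le> y m \<and> y m \<le> 1) \<and>
     (\<forall>c\<in>C. \<forall>m\<in>c. y (\<Union>c) \<le> y m) \<and>
     (\<forall>c\<in>C. (\<Sum>m\<in>c. y m) \<le> y (\<Union>c) + real (card c) - 1)}"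

definition proj :: "monomial set \<Rightarrow> (monomial \<Rightarrow> real) set \<Rightarrow> (monomial \<Rightarrow> real) set" where
  "proj M' Q = (\<lambda>y. \<lambda>m. if m \<in> M' then y m else 0) ` Q"

definition conv_hull :: "('a \<Rightarrow> real) set \<Rightarrow> ('a \<Rightarrow> real) set" where
  "conv_hull X = {x. \<exists>F u. finite F \<and> F \<subseteq> X \<and> F \<noteq> {} \<and> (\<forall>v\<in>F. 0 \<le> u v) \<and>
       (\<Sum>v\<in>F. u v) = 1 \<and> (\<forall>a. x a = (\<Sum>v\<in>F. u v * v a))}"

definition integral_polytope :: "('a \<Rightarrow> real) set \<Rightarrow> bool" where
  "integral_polytope Q \<longleftrightarrow> Q = conv_hull {x\<in>Q. \<forall>a. x a \<in> \<int>}"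

definition arcs_D :: "andc set \<Rightarrow> (monomial \<times> monomial) set" where
  "arcs_D C = {(\<Union>c, m) | c m. c \<in> C \<and> m \<in> c}"

definition succ_set :: "(monomial \<times> monomial) set \<Rightarrow> monomial set \<Rightarrow> monomial set" where
  "succ_set A W = {v. \<exists>w\<in>W. (w, v) \<in> A\<^sup>*}"

definition pred_set :: "(monomial \<times> monomial) set \<Rightarrow> monomial set \<Rightarrow> monomial set" where
  "pred_set A W = {v. \<exists>w\<in>W. (v, w) \<in> A\<^sup>*}"

definition dpath :: "(monomial \<times> monomial) set \<Rightarrow> monomial \<Rightarrow> monomial \<Rightarrow> monomial list \<Rightarrow> bool" where
  "dpath A a b p \<longleftrightarrow> p \<noteq> [] \<and> hd p = a \<and> last p = b \<and> distinct p \<and>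
     (\<forall>i. Suc i < length p \<longrightarrow> (p ! i, p ! Suc i) \<in> A)"

definition undirected_cycle :: "(monomial \<times> monomial) set \<Rightarrow> bool" where
  "undirected_cycle Z \<longleftrightarrow> (\<exists>vs. distinct vs \<and> 3 \<le> length vs \<and>
     (\<forall>i<length vs. (vs ! i, vs ! ((i+1) mod length vs)) \<in> Z \<or>
                    (vs ! ((i+1) mod length vs), vs ! i) \<in> Z) \<and>
     (\<forall>(a,b)\<in>Z. \<exists>i<length vs. {a, b} = {vs ! i, vs ! ((i+1) mod length vs)}))"

definition nodes :: "(monomial \<times> monomial) set \<Rightarrow> monomial set" where
  "nodes Z = Domain Z \<union> Range Z"

definition U_nodes :: "(monomial \<times> monomial) set \<Rightarrow> monomial set" where
  "U_nodes Z = {v. 2 \<le> card {w. (v, w) \<in> Z}}"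

definition L_nodes :: "(monomial \<times> monomial) set \<Rightarrow> monomial set" where
  "L_nodes Z = {v. 2 \<le> card {w. (w, v) \<in> Z}}"

end

theory Submission
  imports Defs
begin

lemma lin_basic:
  assumes "simple_linearization n M C"
  shows lin_M: "\<forall>m\<in>M. m \<noteq> {} \<and> m \<subseteq> {1..n}"
    and lin_S: "singletons n \<subseteq> M"
    and lin_C: "\<forall>c\<in>C. c \<subseteq> M \<and> \<Union>c \<in> M"
    and lin_cons: "\<forall>m\<in>proper_monos n M. \<exists>c\<in>C. \<Union>c = m \<and> (\<forall>m'\<in>c. card m' < card m)"
    and lin_uniq: "\<forall>m\<in>proper_monos n M. \<exists>!c. c \<in> C \<and> \<Union>c = m"
    and lin_card: "card C = card (proper_monos n M)"
  using assms unfolding simple_linearization_def linearization_def by simp_all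

lemma lin_finM: assumes "simple_linearization n M C" shows "finite M"
proof -
  have "M \<subseteq> Pow {1..n}" using lin_M[OF assms] by auto
  then show ?thesis by (rule finite_subset) simp
qed

lemma lin_finC: assumes "simple_linearization n M C" shows "finite C"
proof -
  have "C \<subseteq> Pow M" using lin_C[OF assms] by auto
  moreover have "finite (Pow M)" using lin_finM[OF assms] by simp
  ultimately show ?thesis by (rule finite_subset)
qed

lemma lin_res_proper:
  assumes s: "simple_linearization n M C" and c: "c \<in> C"
  shows "\<Union>c \<in> proper_monos n M"
proof -
  let ?P = "proper_monos n M"
  define f where "f m = (THE c. c \<in> C \<and> \<Union>c = m)" for m
  have fP: "f m \<in> C \<and> \<Union>(f m) = m" if "m \<in> ?P" for m
    unfolding f_def using theI'[OF bspec[OF lin_uniq[OF s] that]] .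
  have inj: "inj_on f ?P"
  proof (rule inj_onI)
    fix x z assume xz: "x \<in> ?P" "z \<in> ?P" "f x = f z"
    have "x = \<Union>(f x)" using fP[OF xz(1)] by simp
    also have "\<dots> = \<Union>(f z)" using xz(3) by simp
    also have "\<dots> = z" using fP[OF xz(2)] by simp
    finally show "x = z" .
  qed
  have sub: "f ` ?P \<subseteq> C" using fP by blast
  have finP: "finite ?P" using lin_finM[OF s] unfolding proper_monos_def by simp
  have "card (f ` ?P) = card C" using card_image[OF inj] lin_card[OF s] by simp
  then have "f ` ?P = C" using sub lin_finC[OF s] by (simp add: card_subset_eq)
  then obtain m where m: "m \<in> ?P" "c = f m" using c by blast
  then show ?thesis using fP[OF m(1)] by simp
qed

lemma lin_c_eq:
  assumes s: "simple_linearization n M C" and "c1 \<in> C" "c2 \<in> C" "\<Union>c1 = \<Union>c2"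
  shows "c1 = c2"
proof -
  have u: "\<exists>!c. c \<in> C \<and> \<Union>c = \<Union>c1" using bspec[OF lin_uniq[OF s] lin_res_proper[OF s assms(2)]] .
  from u show ?thesis
  proof (rule ex1E)
    fix c assume "c \<in> C \<and> \<Union>c = \<Union>c1" "\<forall>y. y \<in> C \<and> \<Union>y = \<Union>c1 \<longrightarrow> y = c"
    note h = this(2)
    have "c1 = c" using spec[OF h, of c1] assms(2) by simp
    moreover have "c2 = c" using spec[OF h, of c2] assms(3,4) by simp
    ultimately show ?thesis by simp
  qed
qed

lemma lin_c_card:
  assumes s: "simple_linearization n M C" and c: "c \<in> C" and m: "m \<in> c"
  shows "card m < card (\<Union>c)"
proof -
  have "\<exists>c'\<in>C. \<Union>c' = \<Union>c \<and> (\<forall>m'\<in>c'. card m' < card (\<Union>c))"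
    using lin_cons[OF s] lin_res_proper[OF s c] by blast
  then obtain c' where "c' \<in> C" "\<Union>c' = \<Union>c" "\<forall>m'\<in>c'. card m' < card (\<Union>c)"
    by blast
  moreover have "c' = c" using lin_c_eq[OF s] calculation c by blast
  ultimately show ?thesis using m by auto
qed

lemma lin_c_fin: assumes s: "simple_linearization n M C" and c: "c \<in> C" shows "finite c"
proof -
  have "c \<subseteq> M" using lin_C[OF s] c by blast
  then show ?thesis using lin_finM[OF s] by (rule finite_subset)
qed

lemma arc_iff: "(x, y) \<in> arcs_D C \<longleftrightarrow> (\<exists>c\<in>C. x = \<Union>c \<and> y \<in> c)"
  unfolding arcs_D_def by auto

lemma arc_sub: "(x, y) \<in> arcs_D C \<Longrightarrow> y \<subseteq> x"
  unfolding arcs_D_def by auto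

lemma rtr_sub: "(x, y) \<in> (arcs_D C)\<^sup>* \<Longrightarrow> y \<subseteq> x"
  by (induction rule: rtrancl_induct) (auto dest: arc_sub)

lemma arc_card: assumes s: "simple_linearization n M C" and "(x, y) \<in> arcs_D C" shows "card y < card x"
proof -
  obtain c where "c \<in> C" "x = \<Union>c" "y \<in> c" using assms(2) unfolding arc_iff by blast
  then show ?thesis using lin_c_card[OF s] by blast
qed

lemma tr_card: assumes s: "simple_linearization n M C" shows "(x, y) \<in> (arcs_D C)\<^sup>+ \<Longrightarrow> card y < card x"
proof (induction rule: trancl_induct)
  case (base y) then show ?case using arc_card[OF s] by blast
next
  case (step y z) then show ?case using arc_card[OF s, of y z] by linarith
qed

lemma arc_not_back: assumes s: "simple_linearization n M C"
  and "(x, y) \<in> arcs_D C" shows "(y, x) \<notin> (arcs_D C)\<^sup>*"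
proof
  assume "(y, x) \<in> (arcs_D C)\<^sup>*"
  then have "(x, x) \<in> (arcs_D C)\<^sup>+" using assms(2) by (rule rtrancl_into_trancl2[rotated])
  then show False using tr_card[OF s] by blast
qed

lemma arc_src: assumes s: "simple_linearization n M C" and "(x, y) \<in> arcs_D C"
  shows "x \<in> proper_monos n M" "y \<in> M" "x \<in> M"
proof -
  obtain c where c: "c \<in> C" "x = \<Union>c" "y \<in> c" using assms(2) unfolding arc_iff by blast
  show "x \<in> proper_monos n M" using lin_res_proper[OF s c(1)] c(2) by simp
  then show "x \<in> M" unfolding proper_monos_def by simp
  show "y \<in> M" using lin_C[OF s] c by blast
qed

lemma arc_in_c: assumes s: "simple_linearization n M C" and c: "c \<in> C" and "(\<Union>c, y) \<in> arcs_D C"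
  shows "y \<in> c"
proof -
  obtain c' where c': "c' \<in> C" "\<Union>c = \<Union>c'" "y \<in> c'" using assms(3) unfolding arc_iff by blast
  then have "c' = c" using lin_c_eq[OF s c'(1) c] by simp
  then show ?thesis using c' by simp
qed

lemma P_mono: assumes "y \<in> polytope_L M C" shows "(x, x') \<in> (arcs_D C)\<^sup>* \<Longrightarrow> y x \<le> y x'"
proof (induction rule: rtrancl_induct)
  case base then show ?case by simp
next
  case (step a b)
  obtain c where c: "c \<in> C" "a = \<Union>c" "b \<in> c" using step(2) unfolding arc_iff by blast
  have "y a \<le> y b" using assms c unfolding polytope_L_def by blast
  then show ?case using step(3) by linarith
qed

lemma reach_single:
  assumes s: "simple_linearization n M C"
  shows "m \<in> M \<Longrightarrow> i \<in> m \<Longrightarrow> (m, {i}) \<in> (arcs_D C)\<^sup>*"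
proof (induction "card m" arbitrary: m rule: less_induct)
  case less
  show ?case
  proof (cases "m \<in> singletons n")
    case True
    then show ?thesis using less.prems unfolding singletons_def by auto
  next
    case False
    then have "m \<in> proper_monos n M" using less.prems unfolding proper_monos_def by auto
    then obtain c where c: "c \<in> C" "\<Union>c = m" "\<forall>m'\<in>c. card m' < card m"
      using lin_cons[OF s] by metis
    then obtain m' where m': "m' \<in> c" "i \<in> m'" using less.prems by auto
    have "m' \<in> M" using lin_C[OF s] c m' by auto
    then have "(m', {i}) \<in> (arcs_D C)\<^sup>*" using less.hyps c m' by auto
    moreover have "(m, m') \<in> arcs_D C" using c m' unfolding arcs_D_def by auto
    ultimately show ?thesis by auto
  qed
qed

lemma sum_le_card:
  fixes f :: "'a \<Rightarrow> real"
  assumes "finite c" "\<forall>m\<in>c. f m \<le> 1"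
  shows "(\<Sum>m\<in>c. f m) \<le> real (card c)"
proof -
  have "(\<Sum>m\<in>c. f m) \<le> (\<Sum>m\<in>c. 1)" using assms by (intro sum_mono) auto
  then show ?thesis by simp
qed

lemma sum_le_card1:
  fixes f :: "'a \<Rightarrow> real"
  assumes "finite c" "\<forall>m\<in>c. f m \<le> 1" "xz \<in> c" "f xz \<le> r"
  shows "(\<Sum>m\<in>c. f m) \<le> real (card c) - 1 + r"
proof -
  have "(\<Sum>m\<in>c. f m) = f xz + (\<Sum>m\<in>c - {xz}. f m)" using assms by (simp add: sum.remove)
  also have "(\<Sum>m\<in>c - {xz}. f m) \<le> real (card (c - {xz}))"
    using assms by (intro sum_le_card) auto
  also have "real (card (c - {xz})) = real (card c) - 1" using assms
    using card.remove[OF assms(1) assms(3)] by linarith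
  finally show ?thesis using assms by linarith
qed

lemma sum_le_card2:
  fixes f :: "'a \<Rightarrow> real"
  assumes "finite c" "\<forall>m\<in>c. f m \<le> 1" "a \<in> c" "b \<in> c" "a \<noteq> b" "f a \<le> 1/2" "f b \<le> 1/2"
  shows "(\<Sum>m\<in>c. f m) \<le> real (card c) - 1"
proof -
  have "(\<Sum>m\<in>c. f m) = f a + (\<Sum>m\<in>c - {a}. f m)" using assms by (simp add: sum.remove)
  also have "(\<Sum>m\<in>c - {a}. f m) \<le> real (card (c - {a})) - 1 + 1/2"
    using assms by (intro sum_le_card1[where xz=b]) auto
  also have "real (card (c - {a})) = real (card c) - 1" using assms
    using card.remove[OF assms(1) assms(3)] by linarith
  finally show ?thesis using assms by linarith
qed

lemma P_one:
  assumes s: "simple_linearization n M C" and y: "y \<in> polytope_L M C"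
  shows "m \<in> M \<Longrightarrow> \<forall>i\<in>m. y {i} = 1 \<Longrightarrow> y m = 1"
proof (induction "card m" arbitrary: m rule: less_induct)
  case less
  have le1: "y m \<le> 1" using y less.prems unfolding polytope_L_def by auto
  show ?case
  proof (cases "m \<in> singletons n")
    case True
    then show ?thesis using less.prems unfolding singletons_def by auto
  next
    case False
    then have "m \<in> proper_monos n M" using less.prems unfolding proper_monos_def by auto
    then obtain c where c: "c \<in> C" "\<Union>c = m" "\<forall>m'\<in>c. card m' < card m"
      using lin_cons[OF s] by metis
    have "\<forall>m'\<in>c. y m' = 1"
    proof
      fix m' assume m'c: "m' \<in> c"
      have "m' \<in> M" using lin_C[OF s] c m'c by auto
      moreover have "\<forall>i\<in>m'. y {i} = 1" using less.prems c m'c by auto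
      ultimately show "y m' = 1" using less.hyps[of m'] c m'c by auto
    qed
    then have "(\<Sum>m'\<in>c. y m') = real (card c)" by simp
    moreover have "(\<Sum>m'\<in>c. y m') \<le> y m + real (card c) - 1"
      using y c unfolding polytope_L_def by auto
    ultimately show ?thesis using le1 by linarith
  qed
qed

definition cyc_ok :: "nat set list \<Rightarrow> (nat set \<times> nat set) set \<Rightarrow> bool" where
  "cyc_ok vs Z \<longleftrightarrow> distinct vs \<and> 3 \<le> length vs \<and>
     (\<forall>i<length vs. (vs ! i, vs ! ((i+1) mod length vs)) \<in> Z \<or>
                    (vs ! ((i+1) mod length vs), vs ! i) \<in> Z) \<and>
     (\<forall>(a,b)\<in>Z. \<exists>i<length vs. {a, b} = {vs ! i, vs ! ((i+1) mod length vs)})"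

lemma cyc_okD:
  assumes "cyc_ok vs Z"
  shows "distinct vs" "3 \<le> length vs"
    "\<And>i. i<length vs \<Longrightarrow> (vs ! i, vs ! ((i+1) mod length vs)) \<in> Z \<or>
                    (vs ! ((i+1) mod length vs), vs ! i) \<in> Z"
    "\<And>a b. (a,b)\<in>Z \<Longrightarrow> \<exists>i<length vs. {a, b} = {vs ! i, vs ! ((i+1) mod length vs)}"
  using assms unfolding cyc_ok_def by auto

lemma cyc_rotate:
  assumes "cyc_ok vs Z" "r < length vs"
  shows "cyc_ok (rotate r vs) Z"
proof -
  let ?N = "length vs"
  have N: "3 \<le> ?N" "distinct vs" using cyc_okD[OF assms(1)] by auto
  have rot: "rotate r vs ! i = vs ! ((r + i) mod ?N)" if "i < ?N" for i
    using nth_rotate[OF that] .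
  have rot1: "rotate r vs ! ((i+1) mod ?N) = vs ! (((r + i) mod ?N + 1) mod ?N)" if "i < ?N" for i
  proof -
    have "(i+1) mod ?N < ?N" using N(1) by (intro mod_less_divisor) linarith
    then have "rotate r vs ! ((i+1) mod ?N) = vs ! ((r + (i+1) mod ?N) mod ?N)" using rot by blast
    also have "(r + (i+1) mod ?N) mod ?N = (r + (i+1)) mod ?N" by (rule mod_add_right_eq)
    also have "(r + (i+1)) mod ?N = ((r + i) mod ?N + 1) mod ?N"
      using mod_add_left_eq[of "r + i" ?N 1] by simp
    finally show ?thesis .
  qed
  have P1: "\<forall>i<length (rotate r vs). (rotate r vs ! i, rotate r vs ! ((i+1) mod length (rotate r vs))) \<in> Z \<or>
                    (rotate r vs ! ((i+1) mod length (rotate r vs)), rotate r vs ! i) \<in> Z"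
  proof (intro allI impI)
    fix i assume i: "i < length (rotate r vs)"
    then have i': "i < ?N" by simp
    let ?k = "(r + i) mod ?N"
    have "?k < ?N" using N(1) by (intro mod_less_divisor) linarith
    then have "(vs ! ?k, vs ! ((?k+1) mod ?N)) \<in> Z \<or> (vs ! ((?k+1) mod ?N), vs ! ?k) \<in> Z"
      by (rule cyc_okD(3)[OF assms(1)])
    then show "(rotate r vs ! i, rotate r vs ! ((i+1) mod length (rotate r vs))) \<in> Z \<or>
                    (rotate r vs ! ((i+1) mod length (rotate r vs)), rotate r vs ! i) \<in> Z"
      using rot[OF i'] rot1[OF i'] by simp
  qed
  have P2: "\<forall>(a,b)\<in>Z. \<exists>i<length (rotate r vs). {a, b} = {rotate r vs ! i, rotate r vs ! ((i+1) mod length (rotate r vs))}"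
  proof (intro ballI)
    fix x assume "x \<in> Z"
    then obtain a b where ab: "x = (a, b)" "(a,b) \<in> Z" by (cases x) auto
    then obtain k where k: "k < ?N" "{a, b} = {vs ! k, vs ! ((k+1) mod ?N)}"
      using cyc_okD(4)[OF assms(1)] by blast
    define i where "i = (k + ?N - r) mod ?N"
    have i: "i < ?N" unfolding i_def using N(1) by (intro mod_less_divisor) linarith
    have "(r + i) mod ?N = (r + (k + ?N - r)) mod ?N" unfolding i_def by (simp add: mod_add_right_eq)
    also have "r + (k + ?N - r) = k + ?N" using assms(2) by simp
    also have "(k + ?N) mod ?N = k" using k by simp
    finally have ri: "(r + i) mod ?N = k" .
    have e1: "rotate r vs ! i = vs ! k" using rot[OF i] ri by simp
    have e2: "rotate r vs ! ((i+1) mod ?N) = vs ! ((k+1) mod ?N)" using rot1[OF i] ri by simp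
    have "\<exists>i<length (rotate r vs). {a, b} = {rotate r vs ! i, rotate r vs ! ((i+1) mod length (rotate r vs))}"
      using i e1 e2 k(2) by (intro exI[of _ i]) simp
    then show "case x of (a, b) \<Rightarrow> \<exists>i<length (rotate r vs). {a, b} = {rotate r vs ! i, rotate r vs ! ((i+1) mod length (rotate r vs))}"
      unfolding ab(1) by simp
  qed
  show ?thesis unfolding cyc_ok_def using N P1 P2 by simp
qed

lemma cyc_from_undirected:
  assumes "undirected_cycle Z" "v \<in> Domain Z"
  shows "\<exists>vs. cyc_ok vs Z \<and> vs ! 0 = v"
proof -
  obtain vs where vs: "cyc_ok vs Z" using assms(1) unfolding undirected_cycle_def cyc_ok_def by blast
  obtain w where "(v, w) \<in> Z" using assms(2) by blast
  then obtain k where k: "k < length vs" "{v, w} = {vs ! k, vs ! ((k+1) mod length vs)}"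
    using cyc_okD(4)[OF vs] by blast
  have "v \<in> set vs"
  proof -
    have "(k+1) mod length vs < length vs" using k by (intro mod_less_divisor) linarith
    have "v \<in> {v, w}" by simp
    then have "v = vs ! k \<or> v = vs ! ((k+1) mod length vs)" using k(2) by simp
    then show ?thesis using k(1) \<open>(k+1) mod length vs < length vs\<close> nth_mem by metis
  qed
  then obtain r where r: "r < length vs" "vs ! r = v" by (auto simp: in_set_conv_nth)
  have "cyc_ok (rotate r vs) Z" using cyc_rotate[OF vs r(1)] .
  moreover have "rotate r vs ! 0 = v" using nth_rotate[of 0 vs r] r by (cases vs) auto
  ultimately show ?thesis by blast
qed

locale cyc =
  fixes vs :: "nat set list" and Z A :: "(nat set \<times> nat set) set"
  assumes ok: "cyc_ok vs Z"
    and asym: "\<And>a b. (a,b) \<in> Z \<Longrightarrow> (b,a) \<notin> Z"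
    and ZA: "Z \<subseteq> A"
    and sub: "\<And>x y. (x,y) \<in> A\<^sup>* \<Longrightarrow> y \<subseteq> x"
    and ne: "\<And>x. x \<in> set vs \<Longrightarrow> x \<noteq> {}"
    and u0: "vs ! 0 \<in> U_nodes Z"
    and U2: "\<exists>u\<in>U_nodes Z. u \<noteq> vs ! 0"
begin

abbreviation N where "N \<equiv> length vs"
definition dn where "dn i \<longleftrightarrow> (vs ! i, vs ! ((i+1) mod N)) \<in> Z"
definition up where "up i \<longleftrightarrow> (vs ! ((i+1) mod N), vs ! i) \<in> Z"
definition U' where "U' = U_nodes Z - {vs ! 0}"
definition covered where "covered x \<longleftrightarrow> (\<exists>u\<in>U'. (u, x) \<in> A\<^sup>*)"
definition prv where "prv m = (if m = 0 then N - 1 else m - 1)"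

lemma N3: "3 \<le> N" using cyc_okD(2)[OF ok] .
lemma dist: "distinct vs" using cyc_okD(1)[OF ok] .

lemma modN: "i + 1 < N \<Longrightarrow> (i + 1) mod N = i + 1" by simp

lemma dn_or_up: "i < N \<Longrightarrow> dn i \<or> up i"
  unfolding dn_def up_def using cyc_okD(3)[OF ok] by blast

lemma not_both: "dn i \<Longrightarrow> \<not> up i"
  unfolding dn_def up_def using asym by blast

lemma dnA: "dn i \<Longrightarrow> i + 1 < N \<Longrightarrow> (vs ! i, vs ! (i+1)) \<in> A"
  unfolding dn_def using ZA by (auto simp: modN)

lemma upA: "up i \<Longrightarrow> i + 1 < N \<Longrightarrow> (vs ! (i+1), vs ! i) \<in> A"
  unfolding up_def using ZA by (auto simp: modN)

lemma nxt_lt: "(i + 1) mod N < N" using N3 by (intro mod_less_divisor) linarith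

lemma in_setZ: assumes "(a, b) \<in> Z" shows "a \<in> set vs" "b \<in> set vs"
proof -
  obtain k where k: "k < N" "{a, b} = {vs ! k, vs ! ((k+1) mod N)}" using cyc_okD(4)[OF ok assms] by blast
  have m1: "vs ! k \<in> set vs" using k(1) by simp
  have m2: "vs ! ((k+1) mod N) \<in> set vs" using nxt_lt by simp
  have "a \<in> {a, b}" "b \<in> {a, b}" by simp_all
  then have "a \<in> {vs ! k, vs ! ((k+1) mod N)}" "b \<in> {vs ! k, vs ! ((k+1) mod N)}"
    unfolding k(2) .
  then show "a \<in> set vs" "b \<in> set vs" using m1 m2 by auto
qed

lemma idx_eq: "i < N \<Longrightarrow> j < N \<Longrightarrow> vs ! i = vs ! j \<Longrightarrow> i = j"
  using dist by (simp add: nth_eq_iff_index_eq)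

lemma prv_iff: assumes "i < N" "m < N" shows "(i + 1) mod N = m \<longleftrightarrow> i = prv m"
proof (cases "i + 1 < N")
  case True
  then show ?thesis unfolding prv_def using assms by auto
next
  case False
  then have "i + 1 = N" using assms by simp
  then have "(i + 1) mod N = 0" by simp
  show ?thesis unfolding prv_def using assms \<open>i + 1 = N\<close> \<open>(i + 1) mod N = 0\<close> by auto
qed

lemma prv_lt: "m < N \<Longrightarrow> prv m < N" unfolding prv_def using N3 by auto

lemma out_char:
  assumes m: "m < N" and z: "(vs ! m, w) \<in> Z"
  shows "(w = vs ! ((m+1) mod N) \<and> dn m) \<or> (w = vs ! prv m \<and> up (prv m))"
proof -
  obtain k where k: "k < N" "{vs ! m, w} = {vs ! k, vs ! ((k+1) mod N)}" using cyc_okD(4)[OF ok z] by blast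
  have wm: "w \<noteq> vs ! m" using asym z by blast
  have "(vs ! m = vs ! k \<and> w = vs ! ((k+1) mod N)) \<or> (vs ! m = vs ! ((k+1) mod N) \<and> w = vs ! k)"
    using k(2) by (simp add: doubleton_eq_iff)
  then show ?thesis
  proof
    assume h: "vs ! m = vs ! k \<and> w = vs ! ((k+1) mod N)"
    then have "m = k" using idx_eq m k(1) by blast
    then show ?thesis using h z unfolding dn_def by simp
  next
    assume h: "vs ! m = vs ! ((k+1) mod N) \<and> w = vs ! k"
    then have "m = (k+1) mod N" using idx_eq m nxt_lt by blast
    then have "k = prv m" using prv_iff k(1) m by blast
    then show ?thesis using h z \<open>m = (k+1) mod N\<close> unfolding up_def by simp
  qed
qed

lemma out_fin: "finite {w. (v, w) \<in> Z}"
proof -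
  have "{w. (v, w) \<in> Z} \<subseteq> set vs" using in_setZ by blast
  then show ?thesis by (rule finite_subset) simp
qed

lemma U_char: assumes m: "m < N" and u: "vs ! m \<in> U_nodes Z"
  shows "dn m" "up (prv m)"
proof -
  let ?S = "{w. (vs ! m, w) \<in> Z}"
  have c2: "2 \<le> card ?S" using u unfolding U_nodes_def by simp
  show "dn m"
  proof (rule ccontr)
    assume "\<not> dn m"
    then have "?S \<subseteq> {vs ! prv m}" using out_char[OF m] by blast
    then have "card ?S \<le> card {vs ! prv m}" by (rule card_mono[rotated]) simp
    then show False using c2 by simp
  qed
  show "up (prv m)"
  proof (rule ccontr)
    assume "\<not> up (prv m)"
    then have "?S \<subseteq> {vs ! ((m+1) mod N)}" using out_char[OF m] by blast
    then have "card ?S \<le> card {vs ! ((m+1) mod N)}" by (rule card_mono[rotated]) simp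
    then show False using c2 by simp
  qed
qed

lemma U_intro: assumes "1 \<le> m" "m < N" "dn m" "up (m - 1)"
  shows "vs ! m \<in> U_nodes Z"
proof -
  let ?S = "{w. (vs ! m, w) \<in> Z}"
  have a1: "vs ! ((m+1) mod N) \<in> ?S" using assms(3) unfolding dn_def by simp
  have "(m - 1 + 1) mod N = m" using assms(1,2) by simp
  then have a2: "vs ! (m - 1) \<in> ?S" using assms(4) unfolding up_def by simp
  have "(m+1) mod N \<noteq> m - 1"
  proof (cases "m + 1 < N")
    case True then show ?thesis by simp
  next
    case False then have "m + 1 = N" using assms by simp
    then show ?thesis using N3 assms(1) by simp
  qed
  moreover have "m - 1 < N" using assms(2) by linarith
  ultimately have "vs ! ((m+1) mod N) \<noteq> vs ! (m - 1)" using idx_eq[OF nxt_lt] by blast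
  then have "card {vs ! ((m+1) mod N), vs ! (m - 1)} = 2" by simp
  moreover have "card {vs ! ((m+1) mod N), vs ! (m - 1)} \<le> card ?S"
    using a1 a2 out_fin by (intro card_mono) auto
  ultimately show ?thesis unfolding U_nodes_def by simp
qed

lemma u0_prop: "dn 0" "up (N - 1)"
proof -
  have "0 < N" using N3 by linarith
  then show "dn 0" "up (N - 1)" using U_char[OF _ u0] unfolding prv_def by auto
qed

lemma U'_idx: assumes "u \<in> U'" shows "\<exists>m. 1 \<le> m \<and> m < N \<and> vs ! m = u \<and> dn m \<and> up (m - 1)"
proof -
  have u: "u \<in> U_nodes Z" "u \<noteq> vs ! 0" using assms unfolding U'_def by auto
  have "{w. (u, w) \<in> Z} \<noteq> {}"
  proof
    assume "{w. (u, w) \<in> Z} = {}"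
    then show False using u(1) unfolding U_nodes_def by simp
  qed
  then obtain w where "(u, w) \<in> Z" by blast
  then have "u \<in> set vs" using in_setZ by blast
  then obtain m where m: "m < N" "vs ! m = u" by (auto simp: in_set_conv_nth)
  have "m \<noteq> 0" using m u by auto
  then have "prv m = m - 1" unfolding prv_def by simp
  have "vs ! m \<in> U_nodes Z" using m(2) u(1) by simp
  then have "dn m" "up (m - 1)" using U_char[OF m(1)] \<open>prv m = m - 1\<close> by auto
  moreover have "1 \<le> m" using \<open>m \<noteq> 0\<close> by simp
  ultimately show ?thesis using m by blast
qed

lemma Uidx_U': assumes "1 \<le> m" "m < N" "dn m" "up (m - 1)" shows "vs ! m \<in> U'"
proof -
  have "vs ! m \<noteq> vs ! 0"
  proof
    assume "vs ! m = vs ! 0"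
    moreover have "0 < N" using assms(2) by linarith
    ultimately have "m = 0" using idx_eq assms(2) by blast
    then show False using assms(1) by simp
  qed
  then show ?thesis using U_intro[OF assms] unfolding U'_def by simp
qed

lemma U2_prop: "\<exists>m. 1 \<le> m \<and> m < N \<and> dn m \<and> up (m - 1)"
proof -
  obtain u where "u \<in> U'" using U2 unfolding U'_def by blast
  then show ?thesis using U'_idx by blast
qed

lemma cov_step: assumes "covered x" "(x, y) \<in> A\<^sup>*" shows "covered y"
proof -
  obtain u where u: "u \<in> U'" "(u, x) \<in> A\<^sup>*" using assms(1) unfolding covered_def by blast
  have "(u, y) \<in> A\<^sup>*" by (rule rtrancl_trans[OF u(2) assms(2)])
  then show ?thesis unfolding covered_def using u(1) by blast
qed

lemma cov_U': "u \<in> U' \<Longrightarrow> covered u"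
  unfolding covered_def by blast

lemma dn_chain: "i \<le> j \<Longrightarrow> j < N \<Longrightarrow> (\<forall>l. i \<le> l \<and> l < j \<longrightarrow> dn l) \<Longrightarrow> (vs ! i, vs ! j) \<in> A\<^sup>*"
proof (induction j)
  case 0 then show ?case by simp
next
  case (Suc j)
  show ?case
  proof (cases "i = Suc j")
    case True then show ?thesis by simp
  next
    case False
    then have "i \<le> j" using Suc.prems by simp
    then have "(vs ! i, vs ! j) \<in> A\<^sup>*" using Suc by simp
    moreover have "(vs ! j, vs ! Suc j) \<in> A" using dnA[of j] Suc.prems \<open>i \<le> j\<close> by simp
    ultimately show ?thesis by simp
  qed
qed

lemma up_chain: "i \<le> j \<Longrightarrow> j < N \<Longrightarrow> (\<forall>l. i \<le> l \<and> l < j \<longrightarrow> up l) \<Longrightarrow> (vs ! j, vs ! i) \<in> A\<^sup>*"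
proof (induction j)
  case 0 then show ?case by simp
next
  case (Suc j)
  show ?case
  proof (cases "i = Suc j")
    case True then show ?thesis by simp
  next
    case False
    then have "i \<le> j" using Suc.prems by simp
    then have "(vs ! j, vs ! i) \<in> A\<^sup>*" using Suc by simp
    moreover have "(vs ! Suc j, vs ! j) \<in> A" using upA[of j] Suc.prems \<open>i \<le> j\<close> by simp
    ultimately show ?thesis by (meson converse_rtrancl_into_rtrancl)
  qed
qed

lemma dn_cov: "j < N \<Longrightarrow> dn j \<Longrightarrow> (\<exists>i0<j. up i0) \<Longrightarrow> covered (vs ! j)"
proof (induction j)
  case 0 then show ?case by simp
next
  case (Suc j)
  show ?case
  proof (cases "up j")
    case True
    then have "vs ! Suc j \<in> U'" using Uidx_U'[of "Suc j"] Suc.prems by simp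
    then show ?thesis by (rule cov_U')
  next
    case False
    then have dj: "dn j" using dn_or_up[of j] Suc.prems by simp
    obtain i0 where "i0 < Suc j" "up i0" using Suc.prems by blast
    then have "i0 < j" using False by (cases "i0 = j") auto
    then have "covered (vs ! j)" using Suc.IH Suc.prems dj \<open>up i0\<close> by auto
    moreover have "(vs ! j, vs ! Suc j) \<in> A" using dnA[OF dj] Suc.prems by simp
    ultimately show ?thesis using cov_step by blast
  qed
qed

lemma up_cov_aux: "N - j = k \<Longrightarrow> j < N \<Longrightarrow> up j \<Longrightarrow> (\<exists>i1. j \<le> i1 \<and> i1 < N \<and> dn i1) \<Longrightarrow> covered (vs ! j)"
proof (induction k arbitrary: j)
  case 0 then show ?case by simp
next
  case (Suc k)
  obtain i1 where i1: "j \<le> i1" "i1 < N" "dn i1" using Suc.prems by blast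
  have "i1 \<noteq> j" using i1 not_both Suc.prems by blast
  then have j1: "j + 1 < N" using i1 by simp
  show ?case
  proof (cases "dn (j + 1)")
    case True
    then have "vs ! (j + 1) \<in> U'" using Uidx_U'[of "j + 1"] Suc.prems j1 by simp
    then have "covered (vs ! (j + 1))" by (rule cov_U')
    moreover have "(vs ! (j+1), vs ! j) \<in> A" using upA Suc.prems j1 by simp
    ultimately show ?thesis using cov_step by blast
  next
    case False
    then have uj: "up (j + 1)" using dn_or_up[OF j1] by simp
    have "\<exists>i1. j + 1 \<le> i1 \<and> i1 < N \<and> dn i1" using i1 \<open>i1 \<noteq> j\<close> by (intro exI[of _ i1]) simp
    then have "covered (vs ! (j + 1))" using Suc.IH[of "j + 1"] Suc.prems j1 uj by simp
    moreover have "(vs ! (j+1), vs ! j) \<in> A" using upA Suc.prems j1 by simp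
    ultimately show ?thesis using cov_step by blast
  qed
qed

lemma up_cov: "j < N \<Longrightarrow> up j \<Longrightarrow> (\<exists>i1. j \<le> i1 \<and> i1 < N \<and> dn i1) \<Longrightarrow> covered (vs ! j)"
  using up_cov_aux by blast

lemma interval:
  assumes "i < j" "j < k" "k < N" "covered (vs ! i)" "covered (vs ! k)"
  shows "covered (vs ! j)"
proof (cases "dn j")
  case True
  show ?thesis
  proof (cases "\<exists>i0<j. up i0")
    case True
    then show ?thesis using dn_cov \<open>dn j\<close> assms by simp
  next
    case False
    have "\<forall>l. i \<le> l \<and> l < j \<longrightarrow> dn l"
    proof (intro allI impI)
      fix l assume l: "i \<le> l \<and> l < j"
      then have "l < N" "\<not> up l" using False assms by auto
      then show "dn l" using dn_or_up by blast
    qed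
    then have "(vs ! i, vs ! j) \<in> A\<^sup>*" using dn_chain assms by simp
    then show ?thesis using cov_step assms by blast
  qed
next
  case False
  moreover have "j < N" using assms by simp
  ultimately have uj: "up j" using dn_or_up by blast
  show ?thesis
  proof (cases "\<exists>i1. j \<le> i1 \<and> i1 < N \<and> dn i1")
    case True
    then show ?thesis using up_cov uj assms by simp
  next
    case False
    have "\<forall>l. j \<le> l \<and> l < k \<longrightarrow> up l"
    proof (intro allI impI)
      fix l assume l: "j \<le> l \<and> l < k"
      then have "l < N" "\<not> dn l" using False assms by auto
      then show "up l" using dn_or_up by blast
    qed
    then have "(vs ! k, vs ! j) \<in> A\<^sup>*" using up_chain assms by simp
    then show ?thesis using cov_step assms by blast
  qed
qed

lemma cov_sub: "covered x \<Longrightarrow> x \<subseteq> \<Union>U'"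
  unfolding covered_def using sub by blast

lemma first_cov: "\<exists>x. (vs ! 1, x) \<in> A\<^sup>* \<and> covered x \<and> x \<in> set vs"
proof -
  obtain m where m: "1 \<le> m" "m < N" "dn m" "up (m - 1)" using U2_prop by blast
  have ex: "\<exists>j. up j" using u0_prop by blast
  define j where "j = (LEAST j. up j)"
  have uj: "up j" unfolding j_def using ex by (rule LeastI_ex)
  have lt: "\<And>l. l < j \<Longrightarrow> \<not> up l" unfolding j_def using not_less_Least by blast
  have jN: "j \<le> N - 1" using u0_prop(2) unfolding j_def by (rule Least_le)
  have j0: "j \<noteq> 0"
  proof
    assume "j = 0" then show False using uj u0_prop(1) not_both by simp
  qed
  have "j \<le> m - 1" using m(4) unfolding j_def by (rule Least_le)
  then have "covered (vs ! j)" using up_cov[of j] uj m jN N3 j0 by (intro up_cov) (auto intro!: exI[of _ m])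
  moreover have "(vs ! 1, vs ! j) \<in> A\<^sup>*"
  proof (rule dn_chain)
    show "1 \<le> j" using j0 by simp
    show "j < N" using jN N3 by simp
    show "\<forall>l. 1 \<le> l \<and> l < j \<longrightarrow> dn l"
    proof (intro allI impI)
      fix l assume l: "1 \<le> l \<and> l < j"
      then have "l < N" "\<not> up l" using lt jN N3 by auto
      then show "dn l" using dn_or_up by blast
    qed
  qed
  moreover have "vs ! j \<in> set vs" using jN N3 by simp
  ultimately show ?thesis by blast
qed

lemma last_cov: "\<exists>x. (vs ! (N - 1), x) \<in> A\<^sup>* \<and> covered x \<and> x \<in> set vs"
proof -
  obtain m where m: "1 \<le> m" "m < N" "dn m" "up (m - 1)" using U2_prop by blast
  define D where "D = {l. l < N \<and> dn l}"
  have finD: "finite D" unfolding D_def by simp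
  have mD: "m \<in> D" unfolding D_def using m by simp
  define j where "j = Max D"
  have jD: "j \<in> D" unfolding j_def using finD mD by (intro Max_in) auto
  have mj: "m \<le> j" unfolding j_def using finD mD by simp
  have gt: "\<And>l. j < l \<Longrightarrow> l < N \<Longrightarrow> up l"
  proof -
    fix l assume "j < l" "l < N"
    then have "l \<notin> D" unfolding j_def using finD Max_ge leD by blast
    then show "up l" using dn_or_up \<open>l < N\<close> unfolding D_def by blast
  qed
  have dj: "dn j" "j < N" using jD unfolding D_def by auto
  have jN: "j \<noteq> N - 1"
  proof
    assume "j = N - 1" then show False using dj u0_prop(2) not_both by simp
  qed
  have "m - 1 < j" using m(1) mj by linarith
  then have "\<exists>i0<j. up i0" using m(4) by blast
  then have "covered (vs ! j)" using dn_cov[OF dj(2) dj(1)] by simp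
  moreover have "(vs ! j, vs ! (j+1)) \<in> A" using dnA dj jN by simp
  ultimately have c1: "covered (vs ! (j+1))" using cov_step by blast
  have "(vs ! (N - 1), vs ! (j+1)) \<in> A\<^sup>*"
    using up_chain[of "j+1" "N - 1"] gt dj jN by simp
  moreover have "vs ! (j+1) \<in> set vs" using dj jN by simp
  ultimately show ?thesis using c1 by blast
qed

lemma const_chain:
  fixes val :: "nat \<Rightarrow> real"
  assumes H: "\<And>u. u \<in> U' \<Longrightarrow> \<exists>c. \<forall>w\<in>u. val w = c"
  shows "\<And>w w'. w \<in> \<Union>U' \<Longrightarrow> w' \<in> \<Union>U' \<Longrightarrow> val w = val w'"
proof -
  have pair: "\<exists>c. \<forall>w\<in>x \<union> y. val w = c" if cx: "covered x" and xy: "(x, y) \<in> A\<^sup>*" for x y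
  proof -
    obtain u where u: "u \<in> U'" "(u, x) \<in> A\<^sup>*" using cx unfolding covered_def by blast
    have "(u, y) \<in> A\<^sup>*" using u(2) xy by simp
    then have "x \<union> y \<subseteq> u" using sub u(2) by blast
    then show ?thesis using H[OF u(1)] by blast
  qed
  have cons: "\<exists>c. \<forall>w\<in>vs ! i \<union> vs ! (i+1). val w = c"
    if i1: "i + 1 < N" and ci: "covered (vs ! i)" and ci1: "covered (vs ! (i+1))" for i
  proof (cases "dn i")
    case True
    then show ?thesis using pair[OF ci] dnA i1 by blast
  next
    case False
    moreover have "i < N" using i1 by simp
    ultimately have "up i" using dn_or_up by blast
    then have "\<exists>c. \<forall>w\<in>vs ! (i+1) \<union> vs ! i. val w = c" using pair[OF ci1] upA i1 by blast
    then show ?thesis by (simp add: Un_commute)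
  qed
  have main: "\<exists>c. \<forall>w\<in>vs ! i \<union> vs ! k. val w = c"
    if "i \<le> k" "k < N" "covered (vs ! i)" "covered (vs ! k)" for i k
    using that
  proof (induction k)
    case 0
    then show ?case using pair[of "vs ! i" "vs ! i"] by simp
  next
    case (Suc k)
    show ?case
    proof (cases "i = Suc k")
      case True
      then show ?thesis using pair[of "vs ! i" "vs ! i"] Suc.prems by simp
    next
      case False
      then have ik: "i \<le> k" using Suc.prems by simp
      have ck: "covered (vs ! k)"
      proof (cases "i = k")
        case True then show ?thesis using Suc.prems by simp
      next
        case False
        then show ?thesis using interval[of i k "Suc k"] ik Suc.prems by simp
      qed
      obtain c1 where c1: "\<forall>w\<in>vs ! i \<union> vs ! k. val w = c1" using Suc.IH ik ck Suc.prems by auto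
      obtain c2 where c2: "\<forall>w\<in>vs ! k \<union> vs ! (k+1). val w = c2" using cons[of k] ck Suc.prems by auto
      have "vs ! k \<noteq> {}" using ne Suc.prems by simp
      then obtain w0 where "w0 \<in> vs ! k" by blast
      then have "c1 = c2" using c1 c2 by force
      then show ?thesis using c1 c2 by auto
    qed
  qed
  fix w w' assume w: "w \<in> \<Union>U'" and w': "w' \<in> \<Union>U'"
  obtain u1 where u1: "u1 \<in> U'" "w \<in> u1" using w by blast
  obtain u2 where u2: "u2 \<in> U'" "w' \<in> u2" using w' by blast
  obtain m1 where m1: "m1 < N" "vs ! m1 = u1" using U'_idx[OF u1(1)] by blast
  obtain m2 where m2: "m2 < N" "vs ! m2 = u2" using U'_idx[OF u2(1)] by blast
  have c1: "covered (vs ! m1)" "covered (vs ! m2)" using m1 m2 u1 u2 cov_U' by auto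
  show "val w = val w'"
  proof (cases "m1 \<le> m2")
    case True
    then show ?thesis using main[of m1 m2] c1 m1 m2 u1 u2 by force
  next
    case False
    then show ?thesis using main[of m2 m1] c1 m1 m2 u1 u2 by force
  qed
qed

end

lemma sum_eq_pointwise:
  fixes u f g :: "'a \<Rightarrow> real"
  assumes "finite F" "\<forall>v\<in>F. 0 \<le> u v" "\<forall>v\<in>F. f v \<le> g v"
    "(\<Sum>v\<in>F. u v * f v) = (\<Sum>v\<in>F. u v * g v)"
  shows "\<forall>v\<in>F. u v * f v = u v * g v"
proof -
  have nn: "\<forall>v\<in>F. 0 \<le> u v * (g v - f v)"
  proof
    fix v assume "v \<in> F"
    then have "0 \<le> u v" "0 \<le> g v - f v" using assms(2,3) by auto
    then show "0 \<le> u v * (g v - f v)" by (rule mult_nonneg_nonneg)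
  qed
  have "(\<Sum>v\<in>F. u v * (g v - f v)) = (\<Sum>v\<in>F. u v * g v - u v * f v)"
    by (intro sum.cong refl) (rule right_diff_distrib)
  also have "\<dots> = (\<Sum>v\<in>F. u v * g v) - (\<Sum>v\<in>F. u v * f v)"
    by (rule sum_subtractf)
  also have "\<dots> = 0" using assms(4) by simp
  finally have "(\<Sum>v\<in>F. u v * (g v - f v)) = 0" .
  then have z: "\<forall>v\<in>F. u v * (g v - f v) = 0"
    using sum_nonneg_eq_0_iff[OF assms(1), of "\<lambda>v. u v * (g v - f v)"] nn by simp
  show ?thesis
  proof
    fix v assume "v \<in> F"
    then have "u v * (g v - f v) = 0" using z by blast
    then have "u v = 0 \<or> g v - f v = 0" by simp
    then show "u v * f v = u v * g v" by auto
  qed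
qed

lemma single_reach:
  assumes s: "simple_linearization n M C" and "(x, y) \<in> (arcs_D C)\<^sup>*" "x \<in> singletons n"
  shows "x = y"
  using assms(2)
proof (cases rule: converse_rtranclE)
  case base then show ?thesis by simp
next
  case (step z)
  then have "x \<in> proper_monos n M" using arc_src[OF s] by blast
  then show ?thesis using assms(3) unfolding proper_monos_def by simp
qed

theorem lemma3p14:
  fixes n :: nat and M :: "nat set set" and C :: "nat set set set"
    and T :: "nat set set" and Z :: "(nat set \<times> nat set) set"
  assumes simple: "simple_linearization n M C"
    and T_sub: "T \<subseteq> proper_monos n M"
    and Z_sub: "Z \<subseteq> arcs_D C"
    and U_card: "card (U_nodes Z) > 1"
    and a: "undirected_cycle Z"
    and b: "nodes Z \<subseteq> succ_set (arcs_D C) T"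
    and c: "\<forall>s\<in>singletons n. \<forall>t\<in>T. \<forall>p q. dpath (arcs_D C) t s p \<and> dpath (arcs_D C) t s q \<longrightarrow> p = q"
    and d: "\<forall>s\<in>singletons n. card (pred_set (arcs_D C) {s} \<inter> L_nodes Z) \<le> 1"
    and e: "\<forall>t\<in>T. card (succ_set (arcs_D C) {t} \<inter> U_nodes Z) \<le> 1"
  shows "\<not> integral_polytope (proj (singletons n \<union> T) (polytope_L M C))"
proof
  assume integ: "integral_polytope (proj (singletons n \<union> T) (polytope_L M C))"
  define A where "A = arcs_D C"
  have finU: "finite (U_nodes Z)"
  proof (rule ccontr)
    assume "infinite (U_nodes Z)"
    then have "card (U_nodes Z) = 0" by simp
    then show False using U_card by simp
  qed
  have "\<not> card (U_nodes Z) \<le> Suc 0" using U_card by simp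
  then obtain us u2 where us: "us \<in> U_nodes Z" "u2 \<in> U_nodes Z" "us \<noteq> u2"
    using card_le_Suc0_iff_eq[OF finU] by blast
  have "{w. (us, w) \<in> Z} \<noteq> {}"
  proof
    assume "{w. (us, w) \<in> Z} = {}"
    then show False using us(1) unfolding U_nodes_def by simp
  qed
  then have usD: "us \<in> Domain Z" by blast
  obtain vs where vs: "cyc_ok vs Z" "vs ! 0 = us" using cyc_from_undirected[OF a usD] by blast
  have ZA: "Z \<subseteq> A" using Z_sub unfolding A_def .
  interpret cy: cyc vs Z A
  proof
    show "cyc_ok vs Z" by (rule vs(1))
    show "\<And>a b. (a, b) \<in> Z \<Longrightarrow> (b, a) \<notin> Z"
    proof
      fix a b assume ab: "(a, b) \<in> Z" "(b, a) \<in> Z"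
      then have "(a, b) \<in> A" "(b, a) \<in> A" using ZA by auto
      then show False using arc_not_back[OF simple] unfolding A_def by blast
    qed
    show "Z \<subseteq> A" by (rule ZA)
    show "\<And>x y. (x, y) \<in> A\<^sup>* \<Longrightarrow> y \<subseteq> x" unfolding A_def by (rule rtr_sub)
    show "\<And>x. x \<in> set vs \<Longrightarrow> x \<noteq> {}"
    proof -
      fix x assume "x \<in> set vs"
      then obtain i where i: "i < length vs" "vs ! i = x" by (auto simp: in_set_conv_nth)
      have "(vs ! i, vs ! ((i+1) mod length vs)) \<in> Z \<or> (vs ! ((i+1) mod length vs), vs ! i) \<in> Z"
        using cyc_okD(3)[OF vs(1) i(1)] .
      then have "x \<in> M"
      proof
        assume "(vs ! i, vs ! ((i+1) mod length vs)) \<in> Z"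
        then have "(vs ! i, vs ! ((i+1) mod length vs)) \<in> arcs_D C" using Z_sub by blast
        then show "x \<in> M" using arc_src(3)[OF simple] i(2) by blast
      next
        assume "(vs ! ((i+1) mod length vs), vs ! i) \<in> Z"
        then have "(vs ! ((i+1) mod length vs), vs ! i) \<in> arcs_D C" using Z_sub by blast
        then show "x \<in> M" using arc_src(2)[OF simple] i(2) by blast
      qed
      then show "x \<noteq> {}" using lin_M[OF simple] by blast
    qed
    show "vs ! 0 \<in> U_nodes Z" using vs(2) us(1) by simp
    show "\<exists>u\<in>U_nodes Z. u \<noteq> vs ! 0" using vs(2) us by blast
  qed
  define W where "W = \<Union>cy.U'"
  have "us \<in> nodes Z" using usD unfolding nodes_def by blast
  then obtain ts where ts: "ts \<in> T" "(ts, us) \<in> A\<^sup>*" using b unfolding succ_set_def A_def by blast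
  have tU: "\<exists>t\<in>T. (t, u) \<in> A\<^sup>* \<and> (t, us) \<notin> A\<^sup>*" if uU: "u \<in> cy.U'" for u
  proof -
    have u: "u \<in> U_nodes Z" "u \<noteq> us" using uU vs(2) unfolding cy.U'_def by auto
    have "{w. (u, w) \<in> Z} \<noteq> {}"
    proof
      assume "{w. (u, w) \<in> Z} = {}"
      then show False using u(1) unfolding U_nodes_def by simp
    qed
    then have "u \<in> nodes Z" unfolding nodes_def by blast
    then obtain t where t: "t \<in> T" "(t, u) \<in> A\<^sup>*" using b unfolding succ_set_def A_def by blast
    have "(t, us) \<notin> A\<^sup>*"
    proof
      assume tus: "(t, us) \<in> A\<^sup>*"
      let ?X = "succ_set (arcs_D C) {t} \<inter> U_nodes Z"
      have "u \<in> ?X" "us \<in> ?X" using t tus u(1) us(1) unfolding succ_set_def A_def by auto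
      moreover have "finite ?X" using finU by simp
      ultimately have "\<not> card ?X \<le> Suc 0" using card_le_Suc0_iff_eq u(2) by blast
      moreover have "card ?X \<le> 1" using e t(1) by blast
      ultimately show False by simp
    qed
    then show ?thesis using t by blast
  qed
  have "\<forall>u\<in>cy.U'. \<exists>t. t \<in> T \<and> (t, u) \<in> A\<^sup>* \<and> (t, us) \<notin> A\<^sup>*"
  proof
    fix u assume "u \<in> cy.U'"
    from tU[OF this] obtain t where "t \<in> T" "(t, u) \<in> A\<^sup>*" "(t, us) \<notin> A\<^sup>*" by blast
    then show "\<exists>t. t \<in> T \<and> (t, u) \<in> A\<^sup>* \<and> (t, us) \<notin> A\<^sup>*" by blast
  qed
  from bchoice[OF this] obtain tu where tu: "\<forall>u\<in>cy.U'. tu u \<in> T \<and> (tu u, u) \<in> A\<^sup>* \<and> (tu u, us) \<notin> A\<^sup>*" ..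
  have setM: "x \<in> M" if xs: "x \<in> set vs" for x
  proof -
    obtain i where i: "i < length vs" "vs ! i = x" using xs by (auto simp: in_set_conv_nth)
    have "(vs ! i, vs ! ((i+1) mod length vs)) \<in> Z \<or> (vs ! ((i+1) mod length vs), vs ! i) \<in> Z"
      using cyc_okD(3)[OF vs(1) i(1)] .
    then show "x \<in> M"
    proof
      assume "(vs ! i, vs ! ((i+1) mod length vs)) \<in> Z"
      then have "(vs ! i, vs ! ((i+1) mod length vs)) \<in> arcs_D C" using Z_sub by blast
      then show "x \<in> M" using arc_src(3)[OF simple] i(2) by blast
    next
      assume "(vs ! ((i+1) mod length vs), vs ! i) \<in> Z"
      then have "(vs ! ((i+1) mod length vs), vs ! i) \<in> arcs_D C" using Z_sub by blast
      then show "x \<in> M" using arc_src(2)[OF simple] i(2) by blast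
    qed
  qed
  have U'M: "u \<in> M" "u \<noteq> {}" "u \<subseteq> W" if uU: "u \<in> cy.U'" for u
  proof -
    obtain m where "m < length vs" "vs ! m = u" using cy.U'_idx[OF uU] by blast
    then have "u \<in> set vs" by auto
    then show "u \<in> M" "u \<noteq> {}" using setM cy.ne by auto
    show "u \<subseteq> W" unfolding W_def using uU by blast
  qed
  have Mn: "m \<subseteq> {1..n}" if "m \<in> M" for m using lin_M[OF simple] that by blast
  have WM: "W \<subseteq> {1..n}" unfolding W_def using U'M Mn by blast
  have TM: "t \<in> M" if "t \<in> T" for t using T_sub that unfolding proper_monos_def by blast
  have SM: "{i} \<in> M" "{i} \<in> singletons n" if "i \<in> {1..n}" for i
    using lin_S[OF simple] that unfolding singletons_def by auto
  let ?N = "length vs"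
  have N3: "3 \<le> ?N" using cy.N3 .
  define aa where "aa = vs ! 1"
  define bb where "bb = vs ! (?N - 1)"
  have "(0 + 1) mod ?N = 1" using N3 by simp
  then have Zaa: "(us, aa) \<in> Z" using cy.u0_prop(1) vs(2) unfolding cy.dn_def aa_def by simp
  have "?N - 1 + 1 = ?N" using N3 by simp
  then have "(?N - 1 + 1) mod ?N = 0" by simp
  then have Zbb: "(us, bb) \<in> Z" using cy.u0_prop(2) vs(2) unfolding cy.up_def bb_def by simp
  have ab_ne: "aa \<noteq> bb"
  proof
    assume "aa = bb"
    then have "1 = ?N - 1" using cy.idx_eq[of 1 "?N - 1"] N3 unfolding aa_def bb_def by simp
    then show False using N3 by simp
  qed
  have usaA: "(us, aa) \<in> A" "(us, bb) \<in> A" using Zaa Zbb ZA by auto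
  have usP: "us \<in> proper_monos n M" using arc_src(1)[OF simple] usaA(1) unfolding A_def by blast
  have aW: "aa \<inter> W \<noteq> {}"
  proof -
    obtain x where x: "(aa, x) \<in> A\<^sup>*" "cy.covered x" "x \<in> set vs" using cy.first_cov unfolding aa_def by blast
    have "x \<subseteq> aa" using x(1) rtr_sub unfolding A_def by blast
    moreover have "x \<subseteq> W" using cy.cov_sub[OF x(2)] unfolding W_def .
    moreover have "x \<noteq> {}" using cy.ne x(3) by blast
    ultimately show ?thesis by blast
  qed
  have bW: "bb \<inter> W \<noteq> {}"
  proof -
    obtain x where x: "(bb, x) \<in> A\<^sup>*" "cy.covered x" "x \<in> set vs" using cy.last_cov unfolding bb_def by blast
    have "x \<subseteq> bb" using x(1) rtr_sub unfolding A_def by blast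
    moreover have "x \<subseteq> W" using cy.cov_sub[OF x(2)] unfolding W_def .
    moreover have "x \<noteq> {}" using cy.ne x(3) by blast
    ultimately show ?thesis by blast
  qed
  define y0 :: "nat set \<Rightarrow> real" where
    "y0 m = (if m \<notin> M then 0 else if (m, us) \<in> A\<^sup>* then 0 else if m \<inter> W = {} then 1 else 1/2)" for m
  have y0b: "0 \<le> y0 m" "y0 m \<le> 1" for m unfolding y0_def by auto
  have y0ab: "y0 aa = 1/2" "y0 bb = 1/2"
  proof -
    have "aa \<in> M" "bb \<in> M" using arc_src(2)[OF simple] usaA unfolding A_def by blast+
    moreover have "(aa, us) \<notin> A\<^sup>*" "(bb, us) \<notin> A\<^sup>*" using arc_not_back[OF simple] usaA unfolding A_def by blast+
    ultimately show "y0 aa = 1/2" "y0 bb = 1/2" using aW bW unfolding y0_def by auto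
  qed
  have p1: "\<forall>m. m \<notin> M \<longrightarrow> y0 m = 0" unfolding y0_def by simp
  have p2: "\<forall>m\<in>M. 0 \<le> y0 m \<and> y0 m \<le> 1" using y0b by simp
  have p3: "\<forall>c\<in>C. \<forall>m\<in>c. y0 (\<Union>c) \<le> y0 m"
  proof (intro ballI)
    fix c m assume c: "c \<in> C" and m: "m \<in> c"
    let ?r = "\<Union>c"
    have rm: "(?r, m) \<in> A" unfolding A_def arcs_D_def using c m by blast
    have rM: "?r \<in> M" and mM: "m \<in> M" using lin_C[OF simple] c m by auto
    show "y0 ?r \<le> y0 m"
    proof (cases "(?r, us) \<in> A\<^sup>*")
      case True
      then show ?thesis using y0b[of m] rM unfolding y0_def by simp
    next
      case False
      then have mus: "(m, us) \<notin> A\<^sup>*" using rm by (meson converse_rtrancl_into_rtrancl)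
      show ?thesis
      proof (cases "m \<inter> W = {}")
        case True
        then show ?thesis using y0b[of ?r] mM mus unfolding y0_def by simp
      next
        case False
        then have "?r \<inter> W \<noteq> {}" using m by blast
        then show ?thesis using False mus mM rM \<open>(?r, us) \<notin> A\<^sup>*\<close> unfolding y0_def by simp
      qed
    qed
  qed
  have p4: "\<forall>c\<in>C. (\<Sum>m\<in>c. y0 m) \<le> y0 (\<Union>c) + real (card c) - 1"
  proof
    fix c assume c: "c \<in> C"
    let ?r = "\<Union>c"
    have fc: "finite c" using lin_c_fin[OF simple c] .
    have cM: "c \<subseteq> M" and rM: "?r \<in> M" using lin_C[OF simple] c by auto
    have le1: "\<forall>m\<in>c. y0 m \<le> 1" using y0b by simp
    show "(\<Sum>m\<in>c. y0 m) \<le> y0 ?r + real (card c) - 1"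
    proof (cases "(?r, us) \<in> A\<^sup>*")
      case True
      then have yr: "y0 ?r = 0" unfolding y0_def by simp
      show ?thesis
      proof (cases "?r = us")
        case True
        have "aa \<in> c" "bb \<in> c" using arc_in_c[OF simple c] usaA True unfolding A_def by auto
        then have "(\<Sum>m\<in>c. y0 m) \<le> real (card c) - 1"
          using sum_le_card2[OF fc le1 _ _ ab_ne] y0ab by simp
        then show ?thesis using yr by simp
      next
        case False
        obtain z where z: "(?r, z) \<in> A" "(z, us) \<in> A\<^sup>*"
          using \<open>(?r, us) \<in> A\<^sup>*\<close> False by (cases rule: converse_rtranclE) auto
        have zc: "z \<in> c" using arc_in_c[OF simple c] z(1) unfolding A_def by blast
        then have "y0 z = 0" using z(2) cM unfolding y0_def by auto
        then have "(\<Sum>m\<in>c. y0 m) \<le> real (card c) - 1 + 0"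
          using sum_le_card1[OF fc le1 zc, of 0] by simp
        then show ?thesis using yr by simp
      qed
    next
      case False
      show ?thesis
      proof (cases "?r \<inter> W = {}")
        case True
        then have "y0 ?r = 1" using False rM unfolding y0_def by simp
        moreover have "(\<Sum>m\<in>c. y0 m) \<le> real (card c)" using sum_le_card[OF fc le1] .
        ultimately show ?thesis by simp
      next
        case nW: False
        then have yr: "y0 ?r = 1/2" using False rM unfolding y0_def by simp
        obtain m0 where m0: "m0 \<in> c" "m0 \<inter> W \<noteq> {}" using nW by blast
        have "y0 m0 \<le> 1/2" using m0 unfolding y0_def by auto
        then have "(\<Sum>m\<in>c. y0 m) \<le> real (card c) - 1 + 1/2"
          using sum_le_card1[OF fc le1 m0(1), of "1/2"] by simp
        then show ?thesis using yr by simp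
      qed
    qed
  qed
  have y0P: "y0 \<in> polytope_L M C"
    unfolding polytope_L_def mem_Collect_eq using p1 p2 p3 p4 by blast
  define Q where "Q = proj (singletons n \<union> T) (polytope_L M C)"
  define q where "q = (\<lambda>m. if m \<in> singletons n \<union> T then y0 m else 0)"
  have qQ: "q \<in> Q" unfolding Q_def proj_def q_def by (rule image_eqI[OF refl y0P])
  have "Q = conv_hull {x\<in>Q. \<forall>a. x a \<in> \<int>}" using integ unfolding integral_polytope_def Q_def .
  then have "q \<in> conv_hull {x\<in>Q. \<forall>a. x a \<in> \<int>}" using qQ by simp
  then obtain F uu where F: "finite F" "F \<subseteq> {x\<in>Q. \<forall>a. x a \<in> \<int>}" "F \<noteq> {}"
    "\<forall>v\<in>F. 0 \<le> uu v" "(\<Sum>v\<in>F. uu v) = 1" "\<forall>a. q a = (\<Sum>v\<in>F. uu v * v a)"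
    unfolding conv_hull_def by blast
  have int01: "x = 0 \<or> x = 1" if xi: "x \<in> \<int>" and x0: "0 \<le> x" and x1: "x \<le> (1::real)" for x
  proof -
    obtain k :: int where k: "x = of_int k" using xi by (auto elim: Ints_cases)
    then have "0 \<le> k" "k \<le> 1" using x0 x1 by auto
    then have "k = 0 \<or> k = 1" by auto
    then show ?thesis using k by auto
  qed
  have vS: "v {i} = 0 \<or> v {i} = 1" if vF: "v \<in> F" and i: "i \<in> {1..n}" for v i
  proof -
    have vQ: "v \<in> Q" "v {i} \<in> \<int>" using F(2) vF by auto
    then obtain yv where yv: "yv \<in> polytope_L M C" "v = (\<lambda>m. if m \<in> singletons n \<union> T then yv m else 0)"
      unfolding Q_def proj_def by blast
    have "v {i} = yv {i}" using yv(2) SM[OF i] by simp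
    moreover have "0 \<le> yv {i}" "yv {i} \<le> 1" using yv(1) SM[OF i] unfolding polytope_L_def by auto
    ultimately show ?thesis using int01 vQ(2) by auto
  qed
  have vT: "v t \<le> v {w}" "0 \<le> v t" "(\<forall>i\<in>t. v {i} = 1) \<longrightarrow> v t = 1"
    if vF: "v \<in> F" and t: "t \<in> T" and w: "w \<in> t" for v t w
  proof -
    have vQ: "v \<in> Q" using F(2) vF by auto
    then obtain yv where yv: "yv \<in> polytope_L M C" "v = (\<lambda>m. if m \<in> singletons n \<union> T then yv m else 0)"
      unfolding Q_def proj_def by blast
    have tM: "t \<in> M" using TM[OF t] .
    have tn: "t \<subseteq> {1..n}" using Mn[OF tM] .
    have vt: "v t = yv t" using yv(2) t by simp
    have vi: "v {i} = yv {i}" if "i \<in> t" for i using yv(2) SM[of i] tn that by auto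
    have "(t, {w}) \<in> (arcs_D C)\<^sup>*" using reach_single[OF simple tM w] .
    then have "yv t \<le> yv {w}" using P_mono[OF yv(1)] by blast
    then show "v t \<le> v {w}" using vt vi[OF w] by simp
    show "0 \<le> v t" using vt yv(1) tM unfolding polytope_L_def by auto
    show "(\<forall>i\<in>t. v {i} = 1) \<longrightarrow> v t = 1"
    proof
      assume "\<forall>i\<in>t. v {i} = 1"
      then have "\<forall>i\<in>t. yv {i} = 1" using vi by simp
      then show "v t = 1" using P_one[OF simple yv(1) tM] vt by simp
    qed
  qed
  have qS: "q {i} = (if i \<in> W then 1/2 else 1)" if i: "i \<in> {1..n}" for i
  proof -
    have "({i}, us) \<notin> A\<^sup>*"
    proof
      assume "({i}, us) \<in> A\<^sup>*"
      then have "{i} = us" using single_reach[OF simple _ SM(2)[OF i]] unfolding A_def by blast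
      then show False using usP SM(2)[OF i] unfolding proper_monos_def by simp
    qed
    moreover have "({i} \<inter> W = {}) = (i \<notin> W)" by auto
    ultimately show ?thesis unfolding q_def y0_def using SM[OF i] by simp
  qed
  have qts: "q ts = 0" unfolding q_def y0_def using ts TM by simp
  have qtu: "q (tu u) = 1/2" if uU: "u \<in> cy.U'" for u
  proof -
    have t: "tu u \<in> T" "(tu u, u) \<in> A\<^sup>*" "(tu u, us) \<notin> A\<^sup>*" using tu uU by auto
    have "u \<subseteq> tu u" using t(2) rtr_sub unfolding A_def by blast
    then have "tu u \<inter> W \<noteq> {}" using U'M[OF uU] by blast
    then show ?thesis unfolding q_def y0_def using t TM by simp
  qed
  have E1: "\<forall>v\<in>F. uu v * v {i} = uu v * 1" if i: "i \<in> {1..n}" "i \<notin> W" for i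
  proof (rule sum_eq_pointwise[OF F(1) F(4)])
    show "\<forall>v\<in>F. v {i} \<le> 1" using vS i by fastforce
    have "(\<Sum>v\<in>F. uu v * v {i}) = q {i}" using F(6) by simp
    also have "\<dots> = 1" using qS i by simp
    also have "\<dots> = (\<Sum>v\<in>F. uu v * 1)" using F(5) by simp
    finally show "(\<Sum>v\<in>F. uu v * v {i}) = (\<Sum>v\<in>F. uu v * 1)" .
  qed
  have E2: "\<forall>v\<in>F. uu v * v (tu u) = uu v * v {w}" if uU: "u \<in> cy.U'" and w: "w \<in> u" for u w
  proof (rule sum_eq_pointwise[OF F(1) F(4)])
    have t: "tu u \<in> T" "(tu u, u) \<in> A\<^sup>*" using tu uU by auto
    have "u \<subseteq> tu u" using t(2) rtr_sub unfolding A_def by blast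
    then have wt: "w \<in> tu u" using w by blast
    show "\<forall>v\<in>F. v (tu u) \<le> v {w}" using vT(1)[OF _ t(1) wt] by blast
    have wW: "w \<in> W" "w \<in> {1..n}" using U'M[OF uU] WM w by auto
    have "(\<Sum>v\<in>F. uu v * v (tu u)) = q (tu u)" using F(6) by simp
    also have "\<dots> = 1/2" using qtu[OF uU] .
    also have "\<dots> = q {w}" using qS[OF wW(2)] wW(1) by simp
    also have "\<dots> = (\<Sum>v\<in>F. uu v * v {w})" using F(6) by simp
    finally show "(\<Sum>v\<in>F. uu v * v (tu u)) = (\<Sum>v\<in>F. uu v * v {w})" .
  qed
  have tsn: "ts \<subseteq> {1..n}" using Mn TM ts(1) by blast
  have E3: "\<forall>v\<in>F. uu v * 0 = uu v * v ts"
  proof (rule sum_eq_pointwise[OF F(1) F(4)])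
    obtain w where "w \<in> ts" using TM[OF ts(1)] lin_M[OF simple] by blast
    then show "\<forall>v\<in>F. 0 \<le> v ts" using vT(2)[OF _ ts(1)] by blast
    have "(\<Sum>v\<in>F. uu v * v ts) = q ts" using F(6) by simp
    then show "(\<Sum>v\<in>F. uu v * 0) = (\<Sum>v\<in>F. uu v * v ts)" using qts by simp
  qed
  obtain w0 where w0: "w0 \<in> aa" "w0 \<in> W" using aW by blast
  have w0n: "w0 \<in> {1..n}" using WM w0 by blast
  have zero: "\<forall>v\<in>F. uu v * v {w0} = 0"
  proof
    fix v assume vF: "v \<in> F"
    show "uu v * v {w0} = 0"
    proof (cases "uu v = 0")
      case True then show ?thesis by simp
    next
      case False
      have one: "v {i} = 1" if "i \<in> {1..n}" "i \<notin> W" for i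
        using E1[OF that] vF False by auto
      have H: "\<exists>c. \<forall>w\<in>u. v {w} = c" if uU: "u \<in> cy.U'" for u
      proof -
        have "\<forall>w\<in>u. v {w} = v (tu u)"
        proof
          fix w assume "w \<in> u"
          then have "uu v * v (tu u) = uu v * v {w}" using E2[OF uU] vF by blast
          then show "v {w} = v (tu u)" using False by simp
        qed
        then show ?thesis by blast
      qed
      have const: "v {w} = v {w'}" if "w \<in> W" "w' \<in> W" for w w'
        using cy.const_chain[of "\<lambda>i. v {i}", OF H] that unfolding W_def by blast
      have vts: "v ts = 0" using E3 vF False by auto
      have "v {w0} = 0"
      proof (rule ccontr)
        assume "v {w0} \<noteq> 0"
        then have v1: "v {w0} = 1" using vS[OF vF w0n] by simp
        have "\<forall>i\<in>ts. v {i} = 1"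
        proof
          fix i assume "i \<in> ts"
          then have "i \<in> {1..n}" using tsn by blast
          then show "v {i} = 1" using one const[OF _ w0(2)] v1 by (cases "i \<in> W") auto
        qed
        then have "v ts = 1"
        proof -
          obtain w where "w \<in> ts" using TM[OF ts(1)] lin_M[OF simple] by blast
          then show ?thesis using vT(3)[OF vF ts(1)] \<open>\<forall>i\<in>ts. v {i} = 1\<close> by blast
        qed
        then show False using vts by simp
      qed
      then show ?thesis by simp
    qed
  qed
  have "q {w0} = (\<Sum>v\<in>F. uu v * v {w0})" using F(6) by simp
  also have "\<dots> = (\<Sum>v\<in>F. 0)" using zero by (intro sum.cong refl) blast
  also have "\<dots> = 0" by simp
  finally have "q {w0} = 0" .
  moreover have "q {w0} = 1/2" using qS[OF w0n] w0(2) by simp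
  ultimately show False by simp
qed

end
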